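(* Let $\mathrm A$ be a nontrivial system of Bilocal Classical Theory (BCT) and $\rho=\sum_ip_i|i)_{\mathrm A}$ a deterministic state. For every $N$ and every channel $\mathcal C\in\mathsf{Tr}_1(\mathrm A^{\boxtimes N}\to\mathrm A^{\boxtimes N})$ define \[ \tilde D(\rho^{\boxtimes N},\mathcal C)=\sum_{\mathbf i,\mathbf s}\frac{1}{2^{N-1}}p_{\mathbf i}\,\big\|\big((\mathcal C-\mathcal I_{\mathrm A^{\boxtimes N}})\boxtimes\mathcal I_{\mathrm A^{\boxtimes N}}\big)|(\mathbf i_{\mathbf s}\mathbf i_{\mathbf s})_+)_{\mathrm A^{\boxtimes N}\mathrm A^{\boxtimes N}}\big\|_{\rm op}, \] with $p_{\mathbf i}=p_{i_1}\cdots p_{i_N}$, and let $\tilde I(\rho)$ be defined exactly as the information content $I(\rho)$ but with $D(\rho^{\boxtimes N},\mathcal D\mathcal E)$ replaced by $\tilde D(\rho^{\boxtimes N},\mathcal D\mathcal E)$ in the definition of compression schemes. Then $I(\rho)=\tilde I(\rho)$.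
   Context: BCT is an operational probabilistic theory with the following structure. Systems: a trivial system $\mathrm I$ and, for every integer $D>1$, exactly one system of size $D$. For a nontrivial system $\mathrm A$ of size $D_{\mathrm A}$, every state is a nonnegative combination $\sum_ip_i|i)_{\mathrm A}$ of the $D_{\mathrm A}$ pure states, which are the vertices of the simplex of deterministic states and are jointly perfectly discriminable; each system has a unique deterministic effect $e_{\mathrm A}$ with $(e_{\mathrm A}|i)=1$. For nontrivial $\mathrm A,\mathrm B$, the composite $\mathrm{AB}$ has size $2D_{\mathrm A}D_{\mathrm B}$ and pure states $|(ij)_s)_{\mathrm{AB}}$, $s\in\{+,-\}$, with $|i)_{\mathrm A}\boxtimes|j)_{\mathrm B}=\tfrac12\sum_{s=\pm}|(ij)_s)_{\mathrm{AB}}$ and $((ij)_{s_1}k)_{s_2}=(i(jk)_{s_1s_2})_{s_1}$. Transformations act linearly; channels $\mathcal C\in\mathsf{Tr}_1(\mathrm E\to\mathrm F)$ are exactly those for which for each $j$ there is a probability distribution $\{\lambda^{(j)}_{m\tau}\}$ over $(m,\tau)\in\{1,\dots,D_{\mathrm F}\}\times\{\pm\}$ with $(\mathcal I_{\mathrm A}\boxtimes\mathcal C)|(ij)_s)_{\mathrm{AE}}=\sum_{m,\tau}\lambda^{(j)}_{m\tau}|(im)_{\tau s})_{\mathrm{AF}}$ for every system $\mathrm A$. The system $\mathrm A^{\boxtimes N}=(\cdots((\mathrm A_1\mathrm A_2)\mathrm A_3)\cdots)\mathrm A_N$ (copies of $\mathrm A$) has pure states $|\mathbf i_{\mathbf s})$,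 $\mathbf i\in\{1,\dots,D_{\mathrm A}\}^N$, $\mathbf s\in\{\pm\}^{N-1}$, and $\rho^{\boxtimes N}=\sum_{\mathbf i,\mathbf s}p_{\mathbf i}2^{-(N-1)}|\mathbf i_{\mathbf s})$; $|(\mathbf i_{\mathbf s}\mathbf i_{\mathbf s})_+)$ is the pure state of $\mathrm A^{\boxtimes N}\mathrm A^{\boxtimes N}$ with both component labels $\mathbf i_{\mathbf s}$ and sign $+$. The bibit $\mathrm B$ is the system of size 2. Information content: a dilation of a state $\sigma$ of $\mathrm X$ is a state $\Psi$ of $\mathrm{XE}$ with $(\mathcal I_{\mathrm X}\boxtimes e_{\mathrm E})\Psi=\sigma$; a refinement of $\Psi$ is a finite collection of states from a common preparation test summing to $\Psi$. The operational norm is $\|\delta\|_{\rm op}=\sup_{\{a_0,a_1\}}(a_0-a_1|\delta)$ over binary observation tests (in BCT, the $\ell^1$-norm of the coefficients of $\delta$ in the pure-state basis). $D(\rho^{\boxtimes N},\mathcal C)=\sup_\Psi\sup_{\{\Gamma_i\}}\sum_i\|(\mathcal C\boxtimes\mathcal I_{\mathrm E})\Gamma_i-\Gamma_i\|_{\rm op}$ over dilations $\Psi$ of $\rho^{\boxtimes N}$ and refinements $\{\Gamma_i\}$ of $\Psi$. With $E_{N,M,\varepsilon}(\rho)$ the set of channel pairs $\mathcal E\in\mathsf{Tr}_1(\mathrm A^{\boxtimes N}\to\mathrm B^{\boxtimes M})$, $\mathcal D\in\mathsf{Tr}_1(\mathrm B^{\boxtimes M}\to\mathrm A^{\boxtimes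 N})$ with $D(\rho^{\boxtimes N},\mathcal D\mathcal E)<\varepsilon$, set $R_{N,\varepsilon}(\rho)=\min\{M:E_{N,M,\varepsilon}(\rho)\ne\emptyset\}/N$ and $I(\rho)=\lim_{\varepsilon\to0}\limsup_{N\to\infty}R_{N,\varepsilon}(\rho)$. *)

theory Defs
  imports "HOL-Analysis.Analysis"
begin

text \<open>Signs of BCT are encoded as booleans: True is +, False is -.
  The product of signs s1 s2 is sgnmul s1 s2.\<close>
definition sgnmul :: "bool \<Rightarrow> bool \<Rightarrow> bool" where
  "sgnmul a b = (a = b)"

text \<open>A system is represented by the finite set of labels of its pure states.
  A channel from a system with labels L1 to a system with labels L2 is represented by
  its (unique) family of distributions lam j (m,tau), j in L1, (m,tau) in L2 x signs,
  acting as (I_A boxtimes C)|(i j)_s) = sum lam j (m,tau) |(i m)_(tau s)).\<close>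
definition is_channel :: "'a set \<Rightarrow> 'b set \<Rightarrow> ('a \<Rightarrow> 'b \<times> bool \<Rightarrow> real) \<Rightarrow> bool" where
  "is_channel L1 L2 lam \<longleftrightarrow>
     (\<forall>j\<in>L1. (\<forall>m \<tau>. lam j (m, \<tau>) \<ge> 0) \<and> (\<forall>m \<tau>. m \<notin> L2 \<longrightarrow> lam j (m, \<tau>) = 0)
        \<and> (\<Sum>m\<tau>\<in>L2 \<times> UNIV. lam j m\<tau>) = 1)"

definition chan_comp :: "'b set \<Rightarrow> ('b \<Rightarrow> 'c \<times> bool \<Rightarrow> real) \<Rightarrow> ('a \<Rightarrow> 'b \<times> bool \<Rightarrow> real)
    \<Rightarrow> ('a \<Rightarrow> 'c \<times> bool \<Rightarrow> real)" where
  "chan_comp LB lamD lamE = (\<lambda>j (k, \<sigma>). \<Sum>m\<in>LB. \<Sum>\<tau>\<in>UNIV. lamE j (m, \<tau>) * lamD m (k, sgnmul \<sigma> \<tau>))"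

text \<open>Action of C boxtimes I_E on a vector of the composite XE, whose pure states are labelled
  (x, e, s): (C boxtimes I_E)|(x e)_s) = sum lam x (m,tau) |(m e)_(tau s)).\<close>
definition apply_left :: "'x set \<Rightarrow> ('x \<Rightarrow> 'x \<times> bool \<Rightarrow> real) \<Rightarrow> ('x \<times> 'e \<times> bool \<Rightarrow> real)
    \<Rightarrow> ('x \<times> 'e \<times> bool \<Rightarrow> real)" where
  "apply_left LX lam v = (\<lambda>(m, e, s'). \<Sum>x\<in>LX. \<Sum>\<tau>\<in>UNIV. lam x (m, \<tau>) * v (x, e, sgnmul \<tau> s'))"

text \<open>Action of C on a vector of X itself (composite with the trivial system).\<close>
definition apply_triv :: "'x set \<Rightarrow> ('x \<Rightarrow> 'x \<times> bool \<Rightarrow> real) \<Rightarrow> ('x \<Rightarrow> real) \<Rightarrow> ('x \<Rightarrow> real)" where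
  "apply_triv LX lam v = (\<lambda>m. \<Sum>x\<in>LX. \<Sum>\<tau>\<in>UNIV. lam x (m, \<tau>) * v x)"

text \<open>Operational norm in BCT: l1 norm of the coefficients in the pure-state basis.\<close>
definition op_norm :: "'l set \<Rightarrow> ('l \<Rightarrow> real) \<Rightarrow> real" where
  "op_norm L v = (\<Sum>l\<in>L. \<bar>v l\<bar>)"

definition is_state :: "'l set \<Rightarrow> ('l \<Rightarrow> real) \<Rightarrow> bool" where
  "is_state L v \<longleftrightarrow> (\<forall>l. v l \<ge> 0) \<and> (\<forall>l. l \<notin> L \<longrightarrow> v l = 0)"

text \<open>Values sum_i ||(C boxtimes I_E) Gamma_i - Gamma_i||_op over all dilations Psi of sigma
  (ancilla E trivial, or of size d > 1 with pure states labelled 1..d) and refinements.\<close>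
definition dist_vals :: "('x \<Rightarrow> real) \<Rightarrow> 'x set \<Rightarrow> ('x \<Rightarrow> 'x \<times> bool \<Rightarrow> real) \<Rightarrow> real set" where
  "dist_vals \<sigma> LX lam =
     {(\<Sum>\<Gamma>\<leftarrow>\<Gamma>s. op_norm LX (\<lambda>x. apply_triv LX lam \<Gamma> x - \<Gamma> x)) | \<Gamma>s.
         (\<forall>\<Gamma>\<in>set \<Gamma>s. is_state LX \<Gamma>) \<and> (\<forall>x. (\<Sum>\<Gamma>\<leftarrow>\<Gamma>s. \<Gamma> x) = \<sigma> x)}
   \<union> {(\<Sum>\<Gamma>\<leftarrow>\<Gamma>s. op_norm (LX \<times> {1..d} \<times> UNIV) (\<lambda>l. apply_left LX lam \<Gamma> l - \<Gamma> l)) | d \<Psi> \<Gamma>s.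
         (d::nat) > 1 \<and> is_state (LX \<times> {1..d} \<times> UNIV) \<Psi>
         \<and> (\<forall>x\<in>LX. (\<Sum>(e, s)\<in>{1..d} \<times> UNIV. \<Psi> (x, e, s)) = \<sigma> x)
         \<and> (\<forall>\<Gamma>\<in>set \<Gamma>s. is_state (LX \<times> {1..d} \<times> UNIV) \<Gamma>)
         \<and> (\<forall>l. (\<Sum>\<Gamma>\<leftarrow>\<Gamma>s. \<Gamma> l) = \<Psi> l)}"

definition dist_op :: "('x \<Rightarrow> real) \<Rightarrow> 'x set \<Rightarrow> ('x \<Rightarrow> 'x \<times> bool \<Rightarrow> real) \<Rightarrow> real" where
  "dist_op \<sigma> LX lam = Sup (dist_vals \<sigma> LX lam)"

definition dist_tilde :: "('x \<Rightarrow> real) \<Rightarrow> 'x set \<Rightarrow> ('x \<Rightarrow> 'x \<times> bool \<Rightarrow> real) \<Rightarrow> real" where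
  "dist_tilde \<sigma> LX lam =
     (\<Sum>x\<in>LX. \<sigma> x * op_norm (LX \<times> LX \<times> UNIV)
        (\<lambda>l. apply_left LX lam (\<lambda>l'. if l' = (x, x, True) then 1 else 0) l
             - (if l = (x, x, True) then 1 else 0)))"

text \<open>Pure-state labels (i, s) of A^{boxtimes N} for A of size D.\<close>
definition labels :: "nat \<Rightarrow> nat \<Rightarrow> (nat list \<times> bool list) set" where
  "labels D N = {(i, s). length i = N \<and> set i \<subseteq> {1..D} \<and> length s = N - 1}"

definition rhoN :: "(nat \<Rightarrow> real) \<Rightarrow> nat \<Rightarrow> nat \<Rightarrow> (nat list \<times> bool list \<Rightarrow> real)" where
  "rhoN p D N = (\<lambda>(i, s). if (i, s) \<in> labels D N then prod_list (map p i) / 2 ^ (N - 1) else 0)"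

type_synonym dist_fun =
  "(nat list \<times> bool list \<Rightarrow> real) \<Rightarrow> (nat list \<times> bool list) set
     \<Rightarrow> (nat list \<times> bool list \<Rightarrow> (nat list \<times> bool list) \<times> bool \<Rightarrow> real) \<Rightarrow> real"

text \<open>E_{N,M,eps}(rho) nonempty; the bibit B has size 2.\<close>
definition scheme_exists :: "dist_fun \<Rightarrow> nat \<Rightarrow> (nat \<Rightarrow> real) \<Rightarrow> nat \<Rightarrow> nat \<Rightarrow> real \<Rightarrow> bool" where
  "scheme_exists Dist D p N M \<epsilon> \<longleftrightarrow>
     (\<exists>lamE lamD. is_channel (labels D N) (labels 2 M) lamE \<and> is_channel (labels 2 M) (labels D N) lamD
        \<and> Dist (rhoN p D N) (labels D N) (chan_comp (labels 2 M) lamD lamE) < \<epsilon>)"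

definition rate :: "dist_fun \<Rightarrow> nat \<Rightarrow> (nat \<Rightarrow> real) \<Rightarrow> nat \<Rightarrow> real \<Rightarrow> real" where
  "rate Dist D p N \<epsilon> = real (Inf {M. M \<ge> 1 \<and> scheme_exists Dist D p N M \<epsilon>}) / real N"

definition info_content :: "dist_fun \<Rightarrow> nat \<Rightarrow> (nat \<Rightarrow> real) \<Rightarrow> ereal" where
  "info_content Dist D p = Lim (at_right 0) (\<lambda>\<epsilon>. limsup (\<lambda>N. ereal (rate Dist D p N \<epsilon>)))"

end

theory Submission
  imports Defs
begin

lemma sum_triple:
  assumes "finite A" "finite B"
  shows "(\<Sum>l\<in>A \<times> B \<times> (UNIV::bool set). f l) = (\<Sum>a\<in>A. \<Sum>b\<in>B. \<Sum>s\<in>UNIV. f (a, b, s))"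
  using assms by (simp add: sum.cartesian_product)

definition cst :: "'x set \<Rightarrow> ('x \<Rightarrow> 'x \<times> bool \<Rightarrow> real) \<Rightarrow> 'x \<Rightarrow> real" where
  "cst LX lam x = (\<Sum>m\<in>LX. \<Sum>t\<in>UNIV. \<bar>lam x (m, t) - (if m = x \<and> t then 1 else 0)\<bar>)"

lemma apply_left_delta:
  assumes "x \<in> LX" "finite LX"
  shows "apply_left LX lam (\<lambda>l'. if l' = (x, e0, True) then a else 0) (m, e, s')
     = (if e = e0 then a * lam x (m, s') else 0)"
proof -
  have "apply_left LX lam (\<lambda>l'. if l' = (x, e0, True) then a else 0) (m, e, s')
     = (\<Sum>x'\<in>LX. if x' = x then (if e = e0 then a * lam x (m, s') else 0) else 0)"
    unfolding apply_left_def prod.case by (intro sum.cong refl) (auto simp: UNIV_bool sgnmul_def)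
  also have "\<dots> = (if e = e0 then a * lam x (m, s') else 0)"
    using assms by simp
  finally show ?thesis .
qed

lemma norm_delta:
  assumes "x \<in> LX" "finite LX" "finite E" "e0 \<in> E"
  shows "op_norm (LX \<times> E \<times> UNIV) (\<lambda>l. apply_left LX lam (\<lambda>l'. if l' = (x, e0, True) then a else 0) l
           - (if l = (x, e0, True) then a else 0)) = \<bar>a\<bar> * cst LX lam x"
proof -
  have "op_norm (LX \<times> E \<times> UNIV) (\<lambda>l. apply_left LX lam (\<lambda>l'. if l' = (x, e0, True) then a else 0) l
           - (if l = (x, e0, True) then a else 0))
     = (\<Sum>m\<in>LX. \<Sum>e\<in>E. \<Sum>s\<in>UNIV. if e = e0 then \<bar>a\<bar> * \<bar>lam x (m, s) - (if m = x \<and> s then 1 else 0)\<bar> else 0)"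
    unfolding op_norm_def sum_triple[OF assms(2,3)]
    apply (intro sum.cong refl)
    using assms by (auto simp: apply_left_delta abs_mult[symmetric] right_diff_distrib)
  also have "\<dots> = (\<Sum>m\<in>LX. \<Sum>s\<in>UNIV. \<bar>a\<bar> * \<bar>lam x (m, s) - (if m = x \<and> s then 1 else 0)\<bar>)"
    apply (intro sum.cong refl)
    apply (subst sum.swap)
    using assms by simp
  also have "\<dots> = \<bar>a\<bar> * cst LX lam x"
    unfolding cst_def by (simp add: sum_distrib_left)
  finally show ?thesis .
qed


lemma left_diff_expand:
  assumes "m \<in> LX" "finite LX"
  shows "apply_left LX lam \<Gamma> (m, e, s') - \<Gamma> (m, e, s')
    = (\<Sum>x\<in>LX. \<Sum>\<tau>\<in>UNIV. (lam x (m, \<tau>) - (if x = m \<and> \<tau> then 1 else 0)) * \<Gamma> (x, e, sgnmul \<tau> s'))"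
proof -
  have "(\<Sum>x\<in>LX. \<Sum>\<tau>\<in>UNIV. (if x = m \<and> \<tau> then 1 else 0) * \<Gamma> (x, e, sgnmul \<tau> s')) = \<Gamma> (m, e, s')"
  proof -
    have "\<And>x. (if x = m then 1 else 0) * \<Gamma> (x, e, s') = (if x = m then \<Gamma> (m, e, s') else 0)" by simp
    then show ?thesis using assms by (simp add: UNIV_bool sgnmul_def)
  qed
  then show ?thesis
    unfolding apply_left_def prod.case
    by (simp add: left_diff_distrib sum_subtractf)
qed

lemma bound_left:
  assumes "finite LX" "finite E" "\<forall>l. \<Gamma> l \<ge> 0"
  shows "op_norm (LX \<times> E \<times> UNIV) (\<lambda>l. apply_left LX lam \<Gamma> l - \<Gamma> l)
     \<le> (\<Sum>x\<in>LX. cst LX lam x * (\<Sum>e\<in>E. \<Sum>s\<in>UNIV. \<Gamma> (x, e, s)))"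
proof -
  define A where "A x m \<tau> = \<bar>lam x (m, \<tau>) - (if x = m \<and> \<tau> then 1 else 0)\<bar>" for x m \<tau>
  have "op_norm (LX \<times> E \<times> UNIV) (\<lambda>l. apply_left LX lam \<Gamma> l - \<Gamma> l)
     = (\<Sum>m\<in>LX. \<Sum>e\<in>E. \<Sum>s'\<in>UNIV. \<bar>\<Sum>x\<in>LX. \<Sum>\<tau>\<in>UNIV. (lam x (m, \<tau>) - (if x = m \<and> \<tau> then 1 else 0)) * \<Gamma> (x, e, sgnmul \<tau> s')\<bar>)"
    unfolding op_norm_def sum_triple[OF assms(1,2)]
    using assms by (intro sum.cong refl) (simp add: left_diff_expand)
  also have "\<dots> \<le> (\<Sum>m\<in>LX. \<Sum>e\<in>E. \<Sum>s'\<in>UNIV. \<Sum>x\<in>LX. \<Sum>\<tau>\<in>UNIV. A x m \<tau> * \<Gamma> (x, e, sgnmul \<tau> s'))"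
  proof (intro sum_mono)
    fix m e s'
    have "\<bar>\<Sum>x\<in>LX. \<Sum>\<tau>\<in>UNIV. (lam x (m, \<tau>) - (if x = m \<and> \<tau> then 1 else 0)) * \<Gamma> (x, e, sgnmul \<tau> s')\<bar>
      \<le> (\<Sum>x\<in>LX. \<bar>\<Sum>\<tau>\<in>UNIV. (lam x (m, \<tau>) - (if x = m \<and> \<tau> then 1 else 0)) * \<Gamma> (x, e, sgnmul \<tau> s')\<bar>)"
      by (rule sum_abs)
    also have "\<dots> \<le> (\<Sum>x\<in>LX. \<Sum>\<tau>\<in>UNIV. A x m \<tau> * \<Gamma> (x, e, sgnmul \<tau> s'))"
    proof (intro sum_mono)
      fix x
      have "\<bar>\<Sum>\<tau>\<in>UNIV. (lam x (m, \<tau>) - (if x = m \<and> \<tau> then 1 else 0)) * \<Gamma> (x, e, sgnmul \<tau> s')\<bar>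
        \<le> (\<Sum>\<tau>\<in>UNIV. \<bar>(lam x (m, \<tau>) - (if x = m \<and> \<tau> then 1 else 0)) * \<Gamma> (x, e, sgnmul \<tau> s')\<bar>)"
        by (rule sum_abs)
      also have "\<dots> = (\<Sum>\<tau>\<in>UNIV. A x m \<tau> * \<Gamma> (x, e, sgnmul \<tau> s'))"
        using assms(3) by (intro sum.cong refl) (simp add: A_def abs_mult)
      finally show "\<bar>\<Sum>\<tau>\<in>UNIV. (lam x (m, \<tau>) - (if x = m \<and> \<tau> then 1 else 0)) * \<Gamma> (x, e, sgnmul \<tau> s')\<bar>
        \<le> (\<Sum>\<tau>\<in>UNIV. A x m \<tau> * \<Gamma> (x, e, sgnmul \<tau> s'))" .
    qed
    finally show "\<bar>\<Sum>x\<in>LX. \<Sum>\<tau>\<in>UNIV. (lam x (m, \<tau>) - (if x = m \<and> \<tau> then 1 else 0)) * \<Gamma> (x, e, sgnmul \<tau> s')\<bar>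
      \<le> (\<Sum>x\<in>LX. \<Sum>\<tau>\<in>UNIV. A x m \<tau> * \<Gamma> (x, e, sgnmul \<tau> s'))" .
  qed
  also have "\<dots> = (\<Sum>m\<in>LX. \<Sum>e\<in>E. \<Sum>x\<in>LX. (A x m True + A x m False) * (\<Gamma> (x, e, True) + \<Gamma> (x, e, False)))"
    by (intro sum.cong refl) (simp add: UNIV_bool sgnmul_def sum.distrib[symmetric] algebra_simps)
  also have "\<dots> = (\<Sum>m\<in>LX. \<Sum>x\<in>LX. \<Sum>e\<in>E. (A x m True + A x m False) * (\<Gamma> (x, e, True) + \<Gamma> (x, e, False)))"
    by (intro sum.cong refl) (rule sum.swap)
  also have "\<dots> = (\<Sum>x\<in>LX. \<Sum>m\<in>LX. \<Sum>e\<in>E. (A x m True + A x m False) * (\<Gamma> (x, e, True) + \<Gamma> (x, e, False)))"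
    by (rule sum.swap)
  also have "\<dots> = (\<Sum>x\<in>LX. cst LX lam x * (\<Sum>e\<in>E. \<Sum>s\<in>UNIV. \<Gamma> (x, e, s)))"
  proof (intro sum.cong refl)
    fix x assume "x \<in> LX"
    have "(\<Sum>m\<in>LX. \<Sum>e\<in>E. (A x m True + A x m False) * (\<Gamma> (x, e, True) + \<Gamma> (x, e, False)))
      = (\<Sum>e\<in>E. \<Sum>m\<in>LX. (A x m True + A x m False) * (\<Gamma> (x, e, True) + \<Gamma> (x, e, False)))"
      by (rule sum.swap)
    also have "\<dots> = (\<Sum>e\<in>E. cst LX lam x * (\<Gamma> (x, e, True) + \<Gamma> (x, e, False)))"
      unfolding cst_def sum_distrib_right
      apply (intro sum.cong refl)
      subgoal for e m by (cases "m = x") (simp_all add: A_def UNIV_bool algebra_simps)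
      done
    also have "\<dots> = cst LX lam x * (\<Sum>e\<in>E. \<Sum>s\<in>UNIV. \<Gamma> (x, e, s))"
      by (simp add: UNIV_bool sum_distrib_left add.commute)
    finally show "(\<Sum>m\<in>LX. \<Sum>e\<in>E. (A x m True + A x m False) * (\<Gamma> (x, e, True) + \<Gamma> (x, e, False)))
      = cst LX lam x * (\<Sum>e\<in>E. \<Sum>s\<in>UNIV. \<Gamma> (x, e, s))" .
  qed
  finally show ?thesis .
qed


lemma bound_triv:
  assumes "finite LX" "\<forall>x. \<Gamma> x \<ge> 0"
  shows "op_norm LX (\<lambda>x. apply_triv LX lam \<Gamma> x - \<Gamma> x) \<le> (\<Sum>x\<in>LX. cst LX lam x * \<Gamma> x)"
proof -
  define A where "A x m \<tau> = \<bar>lam x (m, \<tau>) - (if x = m \<and> \<tau> then 1 else 0)\<bar>" for x m \<tau>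
  have eq: "apply_triv LX lam \<Gamma> m - \<Gamma> m
    = (\<Sum>x\<in>LX. \<Sum>\<tau>\<in>UNIV. (lam x (m, \<tau>) - (if x = m \<and> \<tau> then 1 else 0)) * \<Gamma> x)" if "m \<in> LX" for m
  proof -
    have "\<And>x. (if x = m then 1 else 0) * \<Gamma> x = (if x = m then \<Gamma> m else 0)" by simp
    then have "(\<Sum>x\<in>LX. \<Sum>\<tau>\<in>UNIV. (if x = m \<and> \<tau> then 1 else 0) * \<Gamma> x) = \<Gamma> m"
      using assms that by (simp add: UNIV_bool)
    then show ?thesis
      unfolding apply_triv_def
      by (simp add: left_diff_distrib sum_subtractf)
  qed
  have "op_norm LX (\<lambda>x. apply_triv LX lam \<Gamma> x - \<Gamma> x)
     = (\<Sum>m\<in>LX. \<bar>\<Sum>x\<in>LX. \<Sum>\<tau>\<in>UNIV. (lam x (m, \<tau>) - (if x = m \<and> \<tau> then 1 else 0)) * \<Gamma> x\<bar>)"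
    unfolding op_norm_def by (intro sum.cong refl) (simp add: eq)
  also have "\<dots> \<le> (\<Sum>m\<in>LX. \<Sum>x\<in>LX. \<Sum>\<tau>\<in>UNIV. A x m \<tau> * \<Gamma> x)"
  proof (intro sum_mono)
    fix m
    have "\<bar>\<Sum>x\<in>LX. \<Sum>\<tau>\<in>UNIV. (lam x (m, \<tau>) - (if x = m \<and> \<tau> then 1 else 0)) * \<Gamma> x\<bar>
      \<le> (\<Sum>x\<in>LX. \<bar>\<Sum>\<tau>\<in>UNIV. (lam x (m, \<tau>) - (if x = m \<and> \<tau> then 1 else 0)) * \<Gamma> x\<bar>)"
      by (rule sum_abs)
    also have "\<dots> \<le> (\<Sum>x\<in>LX. \<Sum>\<tau>\<in>UNIV. A x m \<tau> * \<Gamma> x)"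
    proof (intro sum_mono)
      fix x
      have "\<bar>\<Sum>\<tau>\<in>UNIV. (lam x (m, \<tau>) - (if x = m \<and> \<tau> then 1 else 0)) * \<Gamma> x\<bar>
        \<le> (\<Sum>\<tau>\<in>UNIV. \<bar>(lam x (m, \<tau>) - (if x = m \<and> \<tau> then 1 else 0)) * \<Gamma> x\<bar>)"
        by (rule sum_abs)
      also have "\<dots> = (\<Sum>\<tau>\<in>UNIV. A x m \<tau> * \<Gamma> x)"
        using assms(2) by (intro sum.cong refl) (simp add: A_def abs_mult)
      finally show "\<bar>\<Sum>\<tau>\<in>UNIV. (lam x (m, \<tau>) - (if x = m \<and> \<tau> then 1 else 0)) * \<Gamma> x\<bar>
        \<le> (\<Sum>\<tau>\<in>UNIV. A x m \<tau> * \<Gamma> x)" .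
    qed
    finally show "\<bar>\<Sum>x\<in>LX. \<Sum>\<tau>\<in>UNIV. (lam x (m, \<tau>) - (if x = m \<and> \<tau> then 1 else 0)) * \<Gamma> x\<bar>
      \<le> (\<Sum>x\<in>LX. \<Sum>\<tau>\<in>UNIV. A x m \<tau> * \<Gamma> x)" .
  qed
  also have "\<dots> = (\<Sum>x\<in>LX. \<Sum>m\<in>LX. \<Sum>\<tau>\<in>UNIV. A x m \<tau> * \<Gamma> x)"
    by (rule sum.swap)
  also have "\<dots> = (\<Sum>x\<in>LX. cst LX lam x * \<Gamma> x)"
  proof (intro sum.cong refl)
    fix x assume "x \<in> LX"
    show "(\<Sum>m\<in>LX. \<Sum>\<tau>\<in>UNIV. A x m \<tau> * \<Gamma> x) = cst LX lam x * \<Gamma> x"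
      unfolding cst_def sum_distrib_right
      apply (intro sum.cong refl)
      subgoal for m by (cases "m = x") (simp_all add: A_def UNIV_bool algebra_simps)
      done
  qed
  finally show ?thesis .
qed

lemma sum_list_sum_swap:
  "(\<Sum>\<Gamma>\<leftarrow>\<Gamma>s. \<Sum>x\<in>A. f x \<Gamma>) = (\<Sum>x\<in>A. \<Sum>\<Gamma>\<leftarrow>\<Gamma>s. f x \<Gamma>)"
  by (induction \<Gamma>s) (simp_all add: sum.distrib)

lemma tilde_val:
  assumes "finite LX"
  shows "dist_tilde \<sigma> LX lam = (\<Sum>x\<in>LX. cst LX lam x * \<sigma> x)"
  unfolding dist_tilde_def
  using assms by (intro sum.cong refl) (simp add: norm_delta)

lemma dist_eq:
  assumes fin: "finite LX" and nn: "\<forall>x\<in>LX. \<sigma> x \<ge> 0"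
  shows "dist_op \<sigma> LX lam = dist_tilde \<sigma> LX lam"
  unfolding dist_op_def
proof (rule cSup_eq_maximum)
  obtain xs where xs: "set xs = LX" "distinct xs" using finite_distinct_list[OF fin] by blast
  define \<Psi> :: "_ \<Rightarrow> real" where "\<Psi> l = (if fst l \<in> LX \<and> snd l = (1::nat, True) then \<sigma> (fst l) else 0)" for l
  define G where "G x = (\<lambda>l. if l = (x, 1::nat, True) then \<sigma> x else 0)" for x
  define \<Gamma>s where "\<Gamma>s = map G xs"
  have val: "(\<Sum>\<Gamma>\<leftarrow>\<Gamma>s. op_norm (LX \<times> {1..2} \<times> UNIV) (\<lambda>l. apply_left LX lam \<Gamma> l - \<Gamma> l))
     = dist_tilde \<sigma> LX lam"
  proof -
    have "(\<Sum>\<Gamma>\<leftarrow>\<Gamma>s. op_norm (LX \<times> {1..2} \<times> UNIV) (\<lambda>l. apply_left LX lam \<Gamma> l - \<Gamma> l))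
      = (\<Sum>x\<leftarrow>xs. op_norm (LX \<times> {1..2} \<times> UNIV) (\<lambda>l. apply_left LX lam (G x) l - G x l))"
      unfolding \<Gamma>s_def by (simp add: comp_def)
    also have "\<dots> = (\<Sum>x\<in>LX. op_norm (LX \<times> {1..2} \<times> UNIV) (\<lambda>l. apply_left LX lam (G x) l - G x l))"
      using xs by (simp add: sum_list_distinct_conv_sum_set)
    also have "\<dots> = (\<Sum>x\<in>LX. cst LX lam x * \<sigma> x)"
      unfolding G_def using fin nn by (intro sum.cong refl) (simp add: norm_delta)
    finally show ?thesis using tilde_val[OF fin] by simp
  qed
  have "\<Psi> l = (\<Sum>\<Gamma>\<leftarrow>\<Gamma>s. \<Gamma> l)" for l
  proof -
    have "(\<Sum>\<Gamma>\<leftarrow>\<Gamma>s. \<Gamma> l) = (\<Sum>x\<in>LX. G x l)"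
      unfolding \<Gamma>s_def using xs by (simp add: comp_def sum_list_distinct_conv_sum_set)
    also have "\<dots> = \<Psi> l"
      unfolding G_def \<Psi>_def using fin by (cases l) (auto intro: sum.neutral)
    finally show ?thesis by simp
  qed
  moreover have "is_state (LX \<times> {1..2} \<times> UNIV) \<Psi>"
    unfolding is_state_def \<Psi>_def using nn by auto
  moreover have "\<forall>\<Gamma>\<in>set \<Gamma>s. is_state (LX \<times> {1..2} \<times> UNIV) \<Gamma>"
    unfolding \<Gamma>s_def G_def is_state_def using nn xs by auto
  moreover have "\<forall>x\<in>LX. (\<Sum>(e, s)\<in>{1..2} \<times> UNIV. \<Psi> (x, e, s)) = \<sigma> x"
    unfolding \<Psi>_def by (simp add: sum.cartesian_product[symmetric] UNIV_bool)
  ultimately show "dist_tilde \<sigma> LX lam \<in> dist_vals \<sigma> LX lam"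
    unfolding dist_vals_def
    apply (intro UnI2 CollectI exI[where x=2] exI[where x=\<Psi>] exI[where x=\<Gamma>s])
    using val by auto
next
  fix v assume "v \<in> dist_vals \<sigma> LX lam"
  then show "v \<le> dist_tilde \<sigma> LX lam"
    unfolding dist_vals_def
  proof (elim UnE CollectE exE conjE)
    fix \<Gamma>s assume v: "v = (\<Sum>\<Gamma>\<leftarrow>\<Gamma>s. op_norm LX (\<lambda>x. apply_triv LX lam \<Gamma> x - \<Gamma> x))"
      and st: "\<forall>\<Gamma>\<in>set \<Gamma>s. is_state LX \<Gamma>" and sm: "\<forall>x. (\<Sum>\<Gamma>\<leftarrow>\<Gamma>s. \<Gamma> x) = \<sigma> x"
    have "v \<le> (\<Sum>\<Gamma>\<leftarrow>\<Gamma>s. \<Sum>x\<in>LX. cst LX lam x * \<Gamma> x)"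
      unfolding v using st fin by (intro sum_list_mono bound_triv) (auto simp: is_state_def)
    also have "\<dots> = (\<Sum>x\<in>LX. cst LX lam x * \<sigma> x)"
      by (simp add: sum_list_sum_swap sum_list_const_mult sm)
    finally show ?thesis using tilde_val[OF fin] by simp
  next
    fix d :: nat and \<Psi> \<Gamma>s assume v: "v = (\<Sum>\<Gamma>\<leftarrow>\<Gamma>s. op_norm (LX \<times> {1..d} \<times> UNIV) (\<lambda>l. apply_left LX lam \<Gamma> l - \<Gamma> l))"
      and mg: "\<forall>x\<in>LX. (\<Sum>(e, s)\<in>{1..d} \<times> UNIV. \<Psi> (x, e, s)) = \<sigma> x"
      and st: "\<forall>\<Gamma>\<in>set \<Gamma>s. is_state (LX \<times> {1..d} \<times> UNIV) \<Gamma>" and sm: "\<forall>l. (\<Sum>\<Gamma>\<leftarrow>\<Gamma>s. \<Gamma> l) = \<Psi> l"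
    have "v \<le> (\<Sum>\<Gamma>\<leftarrow>\<Gamma>s. \<Sum>x\<in>LX. cst LX lam x * (\<Sum>e\<in>{1..d}. \<Sum>s\<in>UNIV. \<Gamma> (x, e, s)))"
      unfolding v using st fin by (intro sum_list_mono bound_left) (auto simp: is_state_def finite_atLeastAtMost)
    also have "\<dots> = (\<Sum>x\<in>LX. cst LX lam x * (\<Sum>e\<in>{1..d}. \<Sum>s\<in>UNIV. \<Psi> (x, e, s)))"
      by (simp add: sum_list_sum_swap sum_list_const_mult sm)
    also have "\<dots> = (\<Sum>x\<in>LX. cst LX lam x * \<sigma> x)"
    proof (intro sum.cong refl)
      fix x assume "x \<in> LX"
      then show "cst LX lam x * (\<Sum>e\<in>{1..d}. \<Sum>s\<in>UNIV. \<Psi> (x, e, s)) = cst LX lam x * \<sigma> x"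
        using mg by (simp add: sum.cartesian_product)
    qed
    finally show ?thesis using tilde_val[OF fin] by simp
  qed
qed

lemma finite_labels: "finite (labels D N)"
proof -
  have "labels D N \<subseteq> {i. set i \<subseteq> {1..D} \<and> length i = N} \<times> {s. set s \<subseteq> (UNIV::bool set) \<and> length s = N - 1}"
    unfolding labels_def by auto
  moreover have "finite ({i. set i \<subseteq> {1..D} \<and> length i = N} \<times> {s. set s \<subseteq> (UNIV::bool set) \<and> length s = N - 1})"
    by (intro finite_cartesian_product finite_lists_length_eq) auto
  ultimately show ?thesis by (rule finite_subset)
qed

lemma rhoN_nonneg:
  assumes "\<forall>i\<in>{1..D}. p i \<ge> 0"
  shows "\<forall>x\<in>labels D N. rhoN p D N x \<ge> 0"
  using assms unfolding rhoN_def labels_def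
  by (auto intro!: divide_nonneg_pos prod_list_nonneg simp: subset_eq)

theorem proposition2:
  fixes DA :: nat and p :: "nat \<Rightarrow> real"
  assumes "DA > 1"
    and "\<forall>i\<in>{1..DA}. p i \<ge> 0"
    and "(\<Sum>i=1..DA. p i) = 1"
  shows "info_content dist_op DA p = info_content dist_tilde DA p"
proof -
  have "scheme_exists dist_op DA p = scheme_exists dist_tilde DA p"
    unfolding scheme_exists_def
    using dist_eq[OF finite_labels rhoN_nonneg[OF assms(2)]] by (intro ext) simp
  then show ?thesis unfolding info_content_def rate_def by simp
qed

end
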